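(* For any index $\mathbf{k}$, the element $w_{\hbar}^{\mathcal{S}, \ast}(g_{\mathbf{k}})$ belongs to the $\mathbb{Z}$-submodule $\bigoplus_{\mathbf{l} \in I_{0}}\mathbb{Z}\,g_{\mathbf{l}}$ of $\mathcal C\langle A\rangle$, where $I_0$ is the set of admissible indices.
   Context: Indices: an index is a finite (possibly empty) tuple $\mathbf k=(k_1,\dots,k_r)$ of positive integers; admissible if empty or $k_r\ge2$. Let $\mathcal{C}=\mathbb{Q}[\hbar]$ ($\hbar$ formal), $\mathfrak{H}=\mathcal{C}\langle a,b\rangle$. For $k\ge1$, $g_k=ba^k$; $g_{\mathbf k}=g_{k_1}\cdots g_{k_r}$, $g_\varnothing=1$. $A=\{\hbar b\}\cup\{ba^k\mid k\ge1\}$, $\mathcal{C}\langle A\rangle$ the $\mathcal{C}$-subalgebra generated by $1$ and $A$, $\mathfrak z$ the $\mathcal C$-span of $A$. Harmonic product: $\circ_\hbar$ symmetric $\mathcal C$-bilinear on $\mathfrak z$ with $(\hbar b)\circ_\hbar(\hbar b)=\hbar\cdot\hbar b$, $(\hbar b)\circ_\hbar g_k=\hbar g_k$, $g_k\circ_\hbar g_l=g_{k+l}$; $\ast_\hbar$ on $\mathcal{C}\langle A\rangle$: $w\ast_\hbar1=1\ast_\hbar w=w$, $(wu)\ast_\hbar(w'v)=(w\ast_\hbar w'v)u+(wu\ast_\hbar w')v+(w\ast_\hbar w')(u\circ_\hbar v)$ ($u,v\in A$). $\psi^\ast$ is the $\mathcal C$-algebra anti-involution of $\mathcal C\langle A\rangle$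 with $\psi^\ast(\hbar b)=\hbar b$, $\psi^\ast(ba^k)=b(-a)^k$ ($k\ge1$). $w^{\mathcal S,\ast}_\hbar$ is the $\mathcal C$-linear map with $w^{\mathcal S,\ast}_\hbar(1)=1$, $w^{\mathcal S,\ast}_\hbar(u_1\cdots u_r)=\sum_{i=0}^r(u_1\cdots u_i)\ast_\hbar\psi^\ast(u_{i+1}\cdots u_r)$ for $u_j\in A$. *)

theory Defs
  imports "HOL-Computational_Algebra.Polynomial"
begin

text \<open>Letters of the alphabet A: HB stands for hbar*b, G k for g_k = b a^k (k >= 1).
  Elements of C<A> (C = Q[hbar]) are C-linear combinations of words over A,
  represented as coefficient functions  word => rat poly  (the polynomial variable is hbar).\<close>

datatype letter = HB | G nat

type_synonym elt = "letter list \<Rightarrow> rat poly"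

definition hbar :: "rat poly" where "hbar = [:0, 1:]"

definition delta :: "letter list \<Rightarrow> elt" where
  "delta v = (\<lambda>w. if w = v then 1 else 0)"

definition rmul :: "elt \<Rightarrow> rat poly \<Rightarrow> letter \<Rightarrow> elt" where
  "rmul f c x = (\<lambda>w. if w \<noteq> [] \<and> last w = x then c * f (butlast w) else 0)"

fun circ :: "letter \<Rightarrow> letter \<Rightarrow> rat poly \<times> letter" where
  "circ HB HB = (hbar, HB)"
| "circ HB (G k) = (hbar, G k)"
| "circ (G k) HB = (hbar, G k)"
| "circ (G k) (G l) = (1, G (k + l))"

text \<open>Harmonic product of two words (extended bilinearly, this is the product on C<A>).\<close>
function hstar :: "letter list \<Rightarrow> letter list \<Rightarrow> elt" where
  "hstar u v = (if u = [] then delta v else if v = [] then delta u else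
     (\<lambda>w. rmul (hstar (butlast u) v) 1 (last u) w
        + rmul (hstar u (butlast v)) 1 (last v) w
        + rmul (hstar (butlast u) (butlast v)) (fst (circ (last u) (last v)))
               (snd (circ (last u) (last v))) w))"
  by pat_completeness auto
termination
  by (relation "measure (\<lambda>(u, v). length u + length v)") (auto, metis length_greater_0_conv add_less_le_mono diff_less le_eq_less_or_eq less_Suc0 diff_le_self)

text \<open>psi^*: anti-involution, psi(HB) = HB, psi(b a^k) = b (-a)^k = (-1)^k g_k.
  On a word v it gives  psi_sign v * (rev v).\<close>
fun lsign :: "letter \<Rightarrow> rat poly" where
  "lsign HB = 1"
| "lsign (G k) = (-1) ^ k"

definition psi_sign :: "letter list \<Rightarrow> rat poly" where
  "psi_sign v = prod_list (map lsign v)"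

definition psi_word :: "letter list \<Rightarrow> elt" where
  "psi_word v = (\<lambda>w. if w = rev v then psi_sign v else 0)"

text \<open>w^{S,*}_hbar on a word u_1...u_r:
  sum_{i=0}^r (u_1...u_i) * psi^*(u_{i+1}...u_r), using bilinearity of *.\<close>
definition wS :: "letter list \<Rightarrow> elt" where
  "wS u = (\<lambda>w. \<Sum>i\<le>length u. psi_sign (drop i u) * hstar (take i u) (rev (drop i u)) w)"

definition g :: "nat list \<Rightarrow> letter list" where
  "g ks = map G ks"

definition is_index :: "nat list \<Rightarrow> bool" where
  "is_index ks \<longleftrightarrow> (\<forall>k\<in>set ks. k \<ge> 1)"

definition admissible :: "nat list \<Rightarrow> bool" where
  "admissible ks \<longleftrightarrow> is_index ks \<and> (ks = [] \<or> last ks \<ge> 2)"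

definition in_Z_span_adm :: "elt \<Rightarrow> bool" where
  "in_Z_span_adm f \<longleftrightarrow> finite {w. f w \<noteq> 0}
     \<and> (\<forall>w. f w \<noteq> 0 \<longrightarrow> (\<exists>ls. admissible ls \<and> w = g ls))
     \<and> (\<forall>w. \<exists>n::int. f w = of_int n)"

end

theory Submission
  imports Defs
begin

declare hstar.simps[simp del]

definition goodl :: "letter \<Rightarrow> bool" where
  "goodl x \<longleftrightarrow> (\<exists>k\<ge>1. x = G k)"

definition goodw :: "letter list \<Rightarrow> bool" where
  "goodw w \<longleftrightarrow> (\<forall>x\<in>set w. goodl x)"

lemma goodw_simps[simp]: "goodw [] " "goodw (x # w) = (goodl x \<and> goodw w)"
  "goodw (w @ v) = (goodw w \<and> goodw v)"
  by (auto simp: goodw_def)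

lemma goodw_butlast: "goodw w \<Longrightarrow> goodw (butlast w)"
  by (auto simp: goodw_def dest: in_set_butlastD)

lemma goodw_last: "goodw w \<Longrightarrow> w \<noteq> [] \<Longrightarrow> goodl (last w)"
  by (auto simp: goodw_def)

lemma circ_good: "goodl a \<Longrightarrow> goodl b \<Longrightarrow> fst (circ a b) = 1 \<and> goodl (snd (circ a b))
   \<and> snd (circ a b) \<noteq> G 1"
  by (auto simp: goodl_def)

definition goodf :: "elt \<Rightarrow> bool" where
  "goodf f \<longleftrightarrow> finite {w. f w \<noteq> 0} \<and> (\<forall>w. f w \<noteq> 0 \<longrightarrow> goodw w) \<and> (\<forall>w. f w \<in> \<int>)"

lemma goodf_delta: "goodw v \<Longrightarrow> goodf (delta v)"
  unfolding goodf_def delta_def by auto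

lemma goodf_rmul: assumes "goodf f" "c \<in> \<int>" "goodl x" shows "goodf (rmul f c x)"
proof -
  have "{w. rmul f c x w \<noteq> 0} \<subseteq> (\<lambda>w. w @ [x]) ` {w. f w \<noteq> 0}"
    unfolding rmul_def by (auto simp: image_iff intro!: exI[of _ "butlast _"])
  then have f1: "finite {w. rmul f c x w \<noteq> 0}"
    using assms(1) unfolding goodf_def by (auto intro: finite_subset)
  have f2: "goodw w" if "rmul f c x w \<noteq> 0" for w
  proof -
    have "w \<noteq> []" "last w = x" "f (butlast w) \<noteq> 0" using that unfolding rmul_def
      by (auto split: if_splits)
    then show ?thesis using assms(1,3) unfolding goodf_def
      by (metis append_butlast_last_id goodw_simps(1,2,3))
  qed
  have f3: "rmul f c x w \<in> \<int>" for w
    using assms(1,2) unfolding goodf_def rmul_def by auto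
  show ?thesis unfolding goodf_def using f1 f2 f3 by blast
qed

lemma goodf_add: assumes "goodf f" "goodf h" shows "goodf (\<lambda>w. f w + h w)"
proof -
  have s: "{w. f w + h w \<noteq> 0} \<subseteq> {w. f w \<noteq> 0} \<union> {w. h w \<noteq> 0}" by auto
  show ?thesis using assms unfolding goodf_def
    by (intro conjI finite_subset[OF s]) (auto, metis add.right_neutral add_0)
qed

lemma goodf_hstar: "goodw u \<Longrightarrow> goodw v \<Longrightarrow> goodf (hstar u v)"
proof (induction u v rule: hstar.induct)
  case (1 u v)
  show ?case
  proof (cases "u = [] \<or> v = []")
    case True
    then show ?thesis using 1(4,5) by (subst hstar.simps) (auto intro: goodf_delta)
  next
    case False
    have gl: "goodl (last u)" "goodl (last v)" using False 1(4,5) goodw_last by auto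
    have c: "fst (circ (last u) (last v)) = 1" "goodl (snd (circ (last u) (last v)))"
      using circ_good[OF gl] by auto
    have "goodf (hstar (butlast u) v)" using 1(1) False 1(4,5) goodw_butlast by auto
    moreover have "goodf (hstar u (butlast v))" using 1(2) False 1(4,5) goodw_butlast by auto
    moreover have "goodf (hstar (butlast u) (butlast v))" using 1(3) False 1(4,5) goodw_butlast by auto
    ultimately show ?thesis using False gl c
      by (subst hstar.simps) (simp add: goodf_add goodf_rmul)
  qed
qed

lemma rmul_G1: "rmul f c x (w @ [G 1]) = (if x = G 1 then c * f w else 0)"
  unfolding rmul_def by auto

lemma delta_G1: "delta v (w @ [G 1]) = (if v \<noteq> [] \<and> last v = G 1 then delta (butlast v) w else 0)"
  unfolding delta_def by (cases v rule: rev_cases) auto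

lemma hstar_Nil1: "hstar [] v = delta v"
  by (subst hstar.simps) simp

lemma hstar_Nil2: "hstar u [] = delta u"
  by (subst hstar.simps) simp

lemma hstar_nn: "u \<noteq> [] \<Longrightarrow> v \<noteq> [] \<Longrightarrow> hstar u v w =
        rmul (hstar (butlast u) v) 1 (last u) w
        + rmul (hstar u (butlast v)) 1 (last v) w
        + rmul (hstar (butlast u) (butlast v)) (fst (circ (last u) (last v)))
               (snd (circ (last u) (last v))) w"
  by (subst hstar.simps) simp

lemma hstar_T:
  assumes "goodw u" "goodw v"
  shows "hstar u v (w @ [G 1]) =
    (if u \<noteq> [] \<and> last u = G 1 then hstar (butlast u) v w else 0)
  + (if v \<noteq> [] \<and> last v = G 1 then hstar u (butlast v) w else 0)"
proof (cases "u = []")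
  case True
  then show ?thesis by (simp only: hstar_Nil1 delta_G1) simp
next
  case u: False
  show ?thesis
  proof (cases "v = []")
    case True
    then show ?thesis using u by (simp only: hstar_Nil2 delta_G1) simp
  next
    case False
    have gl: "goodl (last u)" "goodl (last v)" using False u assms goodw_last by auto
    have "snd (circ (last u) (last v)) \<noteq> G 1" using circ_good[OF gl] by auto
    then show ?thesis
      unfolding hstar_nn[OF u False] rmul_G1 using False u by simp
  qed
qed

lemma lsign_G1: "lsign (G 1) = -1" by simp

lemma wS_G1:
  assumes "goodw u"
  shows "wS u (w @ [G 1]) = 0"
proof (cases u)
  case Nil
  then show ?thesis unfolding wS_def by (subst hstar.simps) (simp add: delta_def)
next
  case (Cons a u')
  define r where "r = length u'"
  have lr: "length u = Suc r" using Cons r_def by simp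
  define s where "s i = psi_sign (drop i u)" for i
  define a where "a i = (if i < length u \<and> u ! i = G 1 then s i * hstar (take i u) (rev (drop (Suc i) u)) w else 0)" for i
  define b where "b i = (if 1 \<le> i \<and> u ! (i - 1) = G 1 then s i * hstar (take (i - 1) u) (rev (drop i u)) w else 0)" for i
  have gt: "goodw (take i u)" "goodw (rev (drop i u))" for i
    using assms by (auto simp: goodw_def dest: in_set_takeD in_set_dropD)
  have dropc: "i < length u \<Longrightarrow> drop i u = u ! i # drop (Suc i) u" for i
    by (simp add: Cons_nth_drop_Suc)
  have trm: "psi_sign (drop i u) * hstar (take i u) (rev (drop i u)) (w @ [G 1]) = b i + a i"
    if "i \<le> length u" for i
  proof -
    have e1: "(take i u \<noteq> [] \<and> last (take i u) = G 1) = (1 \<le> i \<and> u ! (i - 1) = G 1)"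
      using that by (cases i) (auto simp: take_Suc_conv_app_nth)
    have e2: "butlast (take i u) = take (i - 1) u" using that by (simp add: butlast_take)
    have e3: "(rev (drop i u) \<noteq> [] \<and> last (rev (drop i u)) = G 1) = (i < length u \<and> u ! i = G 1)"
      using that dropc by (cases "i < length u") auto
    have e4: "i < length u \<Longrightarrow> butlast (rev (drop i u)) = rev (drop (Suc i) u)"
      using dropc by simp
    show ?thesis
      unfolding hstar_T[OF gt] e1 e2 e3 a_def b_def s_def
      using e4 by (auto simp: algebra_simps)
  qed
  have "wS u (w @ [G 1]) = (\<Sum>i\<le>length u. b i + a i)"
    unfolding wS_def using trm by (intro sum.cong) auto
  also have "\<dots> = (\<Sum>i\<le>length u. b i) + (\<Sum>i\<le>length u. a i)" by (simp add: sum.distrib)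
  also have "(\<Sum>i\<le>length u. b i) = b 0 + (\<Sum>i\<le>r. b (Suc i))"
    unfolding lr by (rule sum.atMost_Suc_shift)
  also have "(\<Sum>i\<le>r. b (Suc i)) = (\<Sum>i\<le>r. - a i)"
  proof (intro sum.cong refl)
    fix i assume "i \<in> {..r}"
    then have il: "i < length u" using lr by auto
    have "s i = lsign (u ! i) * s (Suc i)" unfolding s_def dropc[OF il] psi_sign_def by simp
    then show "b (Suc i) = - a i" unfolding a_def b_def using il by auto
  qed
  also have "(\<Sum>i\<le>length u. a i) = (\<Sum>i\<le>r. a i) + a (Suc r)"
    unfolding lr by simp
  finally show ?thesis using lr by (simp add: a_def b_def sum_negf)
qed

lemma psi_sign_Ints: "psi_sign v \<in> \<int>"
proof -
  have "lsign x \<in> \<int>" for x by (cases x) auto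
  then show ?thesis unfolding psi_sign_def by (induction v) auto
qed

lemma sum_nz: "(\<Sum>i\<in>A. (c i :: rat poly) * f i w) \<noteq> 0 \<Longrightarrow> \<exists>i\<in>A. f i w \<noteq> 0"
  by (metis (no_types, lifting) mult_zero_right sum.neutral)

lemma goodf_wS: assumes "goodw u" shows "goodf (wS u)"
proof -
  have h: "goodf (hstar (take i u) (rev (drop i u)))" for i
    using assms by (intro goodf_hstar) (auto simp: goodw_def dest: in_set_takeD in_set_dropD)
  have "{w. wS u w \<noteq> 0} \<subseteq> (\<Union>i\<le>length u. {w. hstar (take i u) (rev (drop i u)) w \<noteq> 0})"
    unfolding wS_def by (auto intro: sum_nz)
  moreover have "finite (\<Union>i\<le>length u. {w. hstar (take i u) (rev (drop i u)) w \<noteq> 0})"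
    using h unfolding goodf_def by auto
  ultimately have f: "finite {w. wS u w \<noteq> 0}" by (rule finite_subset)
  have "goodw w" if "wS u w \<noteq> 0" for w
  proof -
    from that obtain i where "hstar (take i u) (rev (drop i u)) w \<noteq> 0"
      using sum_nz[where w=w and f="\<lambda>i. hstar (take i u) (rev (drop i u))" and A="{..length u}" and c="\<lambda>i. psi_sign (drop i u)"] unfolding wS_def by blast
    then show ?thesis using h unfolding goodf_def by auto
  qed
  moreover have "wS u w \<in> \<int>" for w
    unfolding wS_def using h psi_sign_Ints unfolding goodf_def by (auto intro!: Ints_sum Ints_mult)
  ultimately show ?thesis using f unfolding goodf_def by auto
qed

theorem proposition5p1:
  fixes ks :: "nat list"
  assumes "is_index ks"
  shows "in_Z_span_adm (wS (g ks))"
proof -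
  have gk: "goodw (g ks)" using assms unfolding is_index_def g_def goodw_def goodl_def by auto
  have gf: "goodf (wS (g ks))" by (rule goodf_wS[OF gk])
  have adm: "\<exists>ls. admissible ls \<and> w = g ls" if nz: "wS (g ks) w \<noteq> 0" for w
  proof -
    have gw: "goodw w" using gf nz unfolding goodf_def by auto
    define ls where "ls = map (\<lambda>x. case x of G k \<Rightarrow> k | HB \<Rightarrow> 0) w"
    have wls: "w = g ls" unfolding ls_def g_def using gw
      by (induction w) (auto simp: goodl_def)
    have idx: "is_index ls" unfolding ls_def is_index_def using gw
      by (auto simp: goodw_def goodl_def)
    have "last ls \<ge> 2" if ne: "ls \<noteq> []"
    proof -
      have "last ls \<ge> 1" using idx ne unfolding is_index_def by auto
      moreover have "last ls \<noteq> 1"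
      proof
        assume "last ls = 1"
        then have "w = g (butlast ls) @ [G 1]" using wls ne unfolding g_def
          by (metis append_butlast_last_id list.simps(8,9) map_append)
        then have "wS (g ks) w = 0" using wS_G1[OF gk] by simp
        with nz show False by simp
      qed
      ultimately show ?thesis by simp
    qed
    then show ?thesis using idx wls unfolding admissible_def by auto
  qed
  have "\<exists>n::int. wS (g ks) w = of_int n" for w
    using gf unfolding goodf_def by (auto elim!: Ints_cases)
  then show ?thesis using gf adm unfolding in_Z_span_adm_def goodf_def by auto
qed

end
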